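(* Let $\Gamma$ be a Veldkamp $n$-gon ($n\ge2$), let $x,y$ be opposite vertices of $\Gamma$ and let $z\in\Gamma_y$. Then there exists a unique root $(x,\dots,z,y)$ from $x$ to $y$ whose penultimate vertex is $z$.
   Context: A graph is a pair $(V,E)$ with $E$ a set of $2$-element subsets of $V$; $\Gamma_v$ is the set of neighbors of $v$. An $s$-path is a sequence $(x_0,\dots,x_s)$ of vertices with consecutive vertices adjacent and $x_{i-2}\ne x_i$ for $i\in[2,s]$. A closed $s$-path is an $s$-path with $s\ge3$ whose first and last vertices coincide; an $s$-circuit is the subgraph determined by a closed $s$-path. An opposition relation on a set $X$ is a symmetric anti-reflexive relation; it is $k$-plump if for every $S\subseteq X$ with $|S|\le k$ some element of $X$ is related to all elements of $S$. A Veldkamp graph is a graph with a $2$-plump opposition relation $\equiv_v$ on $\Gamma_v$ for each vertex $v$. A path $(v_0,\dots,v_s)$ is straight if $v_{i-1}\equiv_{v_i}v_{i+1}$ for all $i\in[1,s-1]$; a circuit is straight if every path in it is straight. A Veldkamp $n$-gon ($n\ge2$) is a Veldkamp graph satisfying (VP1) connected and bipartite; (VP2) for each $k\in[1,n-1]$ each straight $k$-path is the unique straight path between its endpoints of length at most $k$; (VP3) every straight $(n+1)$-path lies in a straight $2n$-circuit. A root is a straight $n$-path; two vertices $x,y$ are opposite if there is a root from $x$ to $y$. *)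

theory Defs
  imports Main
begin

definition graph :: "'a set \<Rightarrow> 'a set set \<Rightarrow> bool" where
  "graph V E \<longleftrightarrow> (\<forall>e\<in>E. e \<subseteq> V \<and> card e = 2)"

definition nbrs :: "'a set set \<Rightarrow> 'a \<Rightarrow> 'a set" where
  "nbrs E v = {u. {v, u} \<in> E}"

definition opposition_rel :: "'a set \<Rightarrow> ('a \<Rightarrow> 'a \<Rightarrow> bool) \<Rightarrow> bool" where
  "opposition_rel X R \<longleftrightarrow> (\<forall>a b. R a b \<longrightarrow> a \<in> X \<and> b \<in> X)
      \<and> (\<forall>a b. R a b \<longrightarrow> R b a) \<and> (\<forall>a. \<not> R a a)"

definition plump :: "nat \<Rightarrow> 'a set \<Rightarrow> ('a \<Rightarrow> 'a \<Rightarrow> bool) \<Rightarrow> bool" where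
  "plump k X R \<longleftrightarrow> (\<forall>S. S \<subseteq> X \<and> finite S \<and> card S \<le> k \<longrightarrow> (\<exists>x\<in>X. \<forall>s\<in>S. R x s))"

text \<open>opp v a b means a is opposite b in Gamma_v.\<close>
definition veldkamp_graph :: "'a set \<Rightarrow> 'a set set \<Rightarrow> ('a \<Rightarrow> 'a \<Rightarrow> 'a \<Rightarrow> bool) \<Rightarrow> bool" where
  "veldkamp_graph V E opp \<longleftrightarrow> graph V E \<and>
     (\<forall>v\<in>V. opposition_rel (nbrs E v) (opp v) \<and> plump 2 (nbrs E v) (opp v))"

definition is_path :: "'a set \<Rightarrow> 'a set set \<Rightarrow> 'a list \<Rightarrow> bool" where
  "is_path V E xs \<longleftrightarrow> xs \<noteq> [] \<and> set xs \<subseteq> V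
     \<and> (\<forall>i. Suc i < length xs \<longrightarrow> {xs ! i, xs ! Suc i} \<in> E)
     \<and> (\<forall>i. i + 2 < length xs \<longrightarrow> xs ! i \<noteq> xs ! (i + 2))"

definition s_path :: "'a set \<Rightarrow> 'a set set \<Rightarrow> nat \<Rightarrow> 'a list \<Rightarrow> bool" where
  "s_path V E s xs \<longleftrightarrow> is_path V E xs \<and> length xs = s + 1"

definition straight :: "('a \<Rightarrow> 'a \<Rightarrow> 'a \<Rightarrow> bool) \<Rightarrow> 'a list \<Rightarrow> bool" where
  "straight opp xs \<longleftrightarrow> (\<forall>i. i + 2 < length xs \<longrightarrow> opp (xs ! (i + 1)) (xs ! i) (xs ! (i + 2)))"

definition closed_path :: "'a set \<Rightarrow> 'a set set \<Rightarrow> nat \<Rightarrow> 'a list \<Rightarrow> bool" where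
  "closed_path V E s xs \<longleftrightarrow> s_path V E s xs \<and> s \<ge> 3 \<and> hd xs = last xs"

definition path_edges :: "'a list \<Rightarrow> 'a set set" where
  "path_edges xs = {{xs ! i, xs ! Suc i} | i. Suc i < length xs}"

definition straight_circuit :: "('a \<Rightarrow> 'a \<Rightarrow> 'a \<Rightarrow> bool) \<Rightarrow> 'a list \<Rightarrow> bool" where
  "straight_circuit opp c \<longleftrightarrow> (\<forall>q. is_path (set c) (path_edges c) q \<longrightarrow> straight opp q)"

definition connected_graph :: "'a set \<Rightarrow> 'a set set \<Rightarrow> bool" where
  "connected_graph V E \<longleftrightarrow> (\<forall>x\<in>V. \<forall>y\<in>V. \<exists>w. w \<noteq> [] \<and> set w \<subseteq> V \<and> hd w = x \<and> last w = y
       \<and> (\<forall>i. Suc i < length w \<longrightarrow> {w ! i, w ! Suc i} \<in> E))"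

definition bipartite :: "'a set \<Rightarrow> 'a set set \<Rightarrow> bool" where
  "bipartite V E \<longleftrightarrow> (\<exists>f :: 'a \<Rightarrow> bool. \<forall>u\<in>V. \<forall>v\<in>V. {u, v} \<in> E \<longrightarrow> f u \<noteq> f v)"

definition veldkamp_ngon :: "nat \<Rightarrow> 'a set \<Rightarrow> 'a set set \<Rightarrow> ('a \<Rightarrow> 'a \<Rightarrow> 'a \<Rightarrow> bool) \<Rightarrow> bool" where
  "veldkamp_ngon n V E opp \<longleftrightarrow> n \<ge> 2 \<and> veldkamp_graph V E opp
     \<and> connected_graph V E \<and> bipartite V E
     \<and> (\<forall>k p. 1 \<le> k \<and> k \<le> n - 1 \<and> s_path V E k p \<and> straight opp p \<longrightarrow>
           (\<forall>q. is_path V E q \<and> straight opp q \<and> length q \<le> k + 1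
                \<and> hd q = hd p \<and> last q = last p \<longrightarrow> q = p))
     \<and> (\<forall>p. s_path V E (n + 1) p \<and> straight opp p \<longrightarrow>
           (\<exists>c. closed_path V E (2 * n) c \<and> straight_circuit opp c
                \<and> is_path (set c) (path_edges c) p))"

definition root :: "nat \<Rightarrow> 'a set \<Rightarrow> 'a set set \<Rightarrow> ('a \<Rightarrow> 'a \<Rightarrow> 'a \<Rightarrow> bool) \<Rightarrow> 'a list \<Rightarrow> bool" where
  "root n V E opp p \<longleftrightarrow> s_path V E n p \<and> straight opp p"

definition opposite :: "nat \<Rightarrow> 'a set \<Rightarrow> 'a set set \<Rightarrow> ('a \<Rightarrow> 'a \<Rightarrow> 'a \<Rightarrow> bool) \<Rightarrow> 'a \<Rightarrow> 'a \<Rightarrow> bool" where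
  "opposite n V E opp x y \<longleftrightarrow> (\<exists>p. root n V E opp p \<and> hd p = x \<and> last p = y)"

end

theory Submission imports Defs begin

lemma vp2:
  assumes "veldkamp_ngon n V E opp" "1 \<le> k" "k \<le> n - 1" "s_path V E k p" "straight opp p"
    "is_path V E q" "straight opp q" "length q \<le> k + 1" "hd q = hd p" "last q = last p"
  shows "q = p"
  using assms unfolding veldkamp_ngon_def by blast

lemma is_path_mono:
  assumes "is_path A B q" "A \<subseteq> V" "B \<subseteq> E" shows "is_path V E q"
  using assms unfolding is_path_def by blast

lemma path_edges_sub: "is_path V E c \<Longrightarrow> path_edges c \<subseteq> E"
  unfolding is_path_def path_edges_def by auto

lemma seg_path:
  assumes "m \<ge> 1"
    and "\<And>k. Suc k < m \<Longrightarrow> {h k, h (Suc k)} \<in> B"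
    and "\<And>k. k < m \<Longrightarrow> h k \<in> A"
    and "\<And>k. k + 2 < m \<Longrightarrow> h k \<noteq> h (k + 2)"
  shows "is_path A B (map h [0..<m])"
  using assms unfolding is_path_def by (auto simp: nth_map)

lemma edge_neq:
  assumes "graph V E" "{u, v} \<in> E" shows "u \<noteq> v"
  using assms unfolding graph_def by fastforce

definition Gf :: "nat \<Rightarrow> 'a list \<Rightarrow> int \<Rightarrow> 'a" where
  "Gf n c i = c ! nat (i mod int (2*n))"

context
  fixes n V E opp c
  assumes ng: "veldkamp_ngon n V E opp"
    and cp: "closed_path V E (2*n) c" and sc: "straight_circuit opp c"
begin

lemma n2: "n \<ge> 2" using ng unfolding veldkamp_ngon_def by simp
lemma gr: "graph V E" using ng unfolding veldkamp_ngon_def veldkamp_graph_def by simp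
lemma cpath: "is_path V E c" using cp unfolding closed_path_def s_path_def by simp
lemma clen: "length c = 2*n + 1" using cp unfolding closed_path_def s_path_def by simp
lemma cN: "c ! 0 = c ! (2*n)"
proof -
  have "c \<noteq> []" using clen by auto
  then show ?thesis using cp clen unfolding closed_path_def by (simp add: hd_conv_nth last_conv_nth)
qed
lemma cV: "set c \<subseteq> V" using cpath unfolding is_path_def by simp
lemma cE: "path_edges c \<subseteq> E" using cpath by (rule path_edges_sub)
lemma cedge: "Suc i < length c \<Longrightarrow> {c ! i, c ! Suc i} \<in> E" using cpath unfolding is_path_def by blast
lemma cnb: "i + 2 < length c \<Longrightarrow> c ! i \<noteq> c ! (i+2)" using cpath unfolding is_path_def by blast

lemma Hstraight: "is_path (set c) (path_edges c) q \<Longrightarrow> straight opp q"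
  using sc unfolding straight_circuit_def by blast

lemma Hpath: "is_path (set c) (path_edges c) q \<Longrightarrow> is_path V E q"
  using is_path_mono cV cE by blast

lemma pe: "Suc i < length c \<Longrightarrow> {c ! i, c ! Suc i} \<in> path_edges c"
  unfolding path_edges_def by blast

lemma wrap: "c ! (2*n - 1) \<noteq> c ! 1"
proof
  assume eq: "c ! (2*n - 1) = c ! 1"
  have n: "n \<ge> 2" by (rule n2)
  define p1 where "p1 = map (\<lambda>k. c ! (1 + k)) [0..<n]"
  define p2 where "p2 = map (\<lambda>k. c ! (2*n - 1 - k)) [0..<n]"
  have h1: "is_path (set c) (path_edges c) p1" unfolding p1_def
  proof (rule seg_path)
    fix k assume "Suc k < n" then show "{c ! (1 + k), c ! (1 + Suc k)} \<in> path_edges c"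
      using pe[of "1+k"] clen by simp
  next
    fix k assume "k < n" then show "c ! (1 + k) \<in> set c" using clen by simp
  next
    fix k assume "k + 2 < n" then show "c ! (1 + k) \<noteq> c ! (1 + (k + 2))"
      using cnb[of "1+k"] clen by (simp add: add.assoc)
  qed (use n in simp)
  have h2: "is_path (set c) (path_edges c) p2" unfolding p2_def
  proof (rule seg_path)
    fix k assume k: "Suc k < n"
    have "{c ! (2*n - 2 - k), c ! Suc (2*n - 2 - k)} \<in> path_edges c"
      using pe[of "2*n - 2 - k"] clen k by simp
    moreover have "Suc (2*n - 2 - k) = 2*n - 1 - k" "2*n - 2 - k = 2*n - 1 - Suc k" using k by auto
    ultimately show "{c ! (2*n - 1 - k), c ! (2*n - 1 - Suc k)} \<in> path_edges c"
      by (simp add: insert_commute)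
  next
    fix k assume "k < n" then show "c ! (2*n - 1 - k) \<in> set c" using clen by simp
  next
    fix k assume k: "k + 2 < n"
    have "c ! (2*n - 3 - k) \<noteq> c ! (2*n - 3 - k + 2)" using cnb[of "2*n-3-k"] clen k by simp
    moreover have "2*n - 3 - k + 2 = 2*n - 1 - k" "2*n - 3 - k = 2*n - 1 - (k+2)" using k by auto
    ultimately show "c ! (2*n - 1 - k) \<noteq> c ! (2*n - 1 - (k + 2))" by metis
  qed (use n in simp)
  have "p2 = p1"
  proof (rule vp2[OF ng, of "n-1"])
    show "1 \<le> n - 1" "n - 1 \<le> n - 1" using n by auto
    show "s_path V E (n - 1) p1" unfolding s_path_def using Hpath[OF h1] n by (simp add: p1_def)
    show "straight opp p1" using Hstraight[OF h1] .
    show "is_path V E p2" using Hpath[OF h2] .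
    show "straight opp p2" using Hstraight[OF h2] .
    show "length p2 \<le> n - 1 + 1" by (simp add: p2_def)
    show "hd p2 = hd p1" using n eq by (simp add: p1_def p2_def hd_map)
    show "last p2 = last p1" using n by (simp add: p1_def p2_def last_map)
  qed
  then have "p2 ! (n-2) = p1 ! (n-2)" by simp
  moreover have "Suc (n - 2) = n - 1" "2*n - 1 - (n-2) = n+1" using n by auto
  ultimately have "c ! (n+1) = c ! (n-1)" using n by (simp add: p1_def p2_def)
  moreover have "c ! (n-1) \<noteq> c ! (n - 1 + 2)" using cnb[of "n-1"] clen n by simp
  ultimately show False using n by simp
qed


abbreviation "G \<equiv> Gf n c"

lemma G_cong: "i mod int (2*n) = j mod int (2*n) \<Longrightarrow> G i = G j"
  unfolding Gf_def by simp

lemma G_nat: "j < 2*n \<Longrightarrow> G (int j) = c ! j"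
  unfolding Gf_def by (simp add: zmod_int[symmetric])

lemma G_idx: "\<exists>j<2*n. G i = c ! j \<and> i mod int (2*n) = int j"
proof -
  have "2*n > 0" using n2 by simp
  then have "0 \<le> i mod int (2*n)" "i mod int (2*n) < int (2*n)" by auto
  then show ?thesis unfolding Gf_def by (intro exI[of _ "nat (i mod int (2*n))"]) auto
qed

lemma G_set: "G i \<in> set c"
  using G_idx[of i] clen by force

lemma G_succ: "G (i+1) = (if i mod int (2*n) + 1 < int (2*n) then c ! nat (i mod int (2*n) + 1) else c ! 0)"
proof -
  have pos: "int (2*n) > 0" using n2 by simp
  have "(i+1) mod int (2*n) = (i mod int (2*n) + 1) mod int (2*n)" by (simp add: mod_add_left_eq)
  moreover have "0 \<le> i mod int (2*n)" "i mod int (2*n) < int (2*n)" using pos by auto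
  moreover have "i mod int (2*n) + 1 = int (2*n) \<Longrightarrow> (i mod int (2*n) + 1) mod int (2*n) = 0" by simp
  ultimately have "(i+1) mod int (2*n) = (if i mod int (2*n) + 1 < int (2*n) then i mod int (2*n) + 1 else 0)"
    by (smt (verit) mod_pos_pos_trivial)
  then show ?thesis unfolding Gf_def by simp
qed

lemma G_edge: "{G i, G (i+1)} \<in> path_edges c"
proof -
  obtain j where j: "j < 2*n" "G i = c ! j" "i mod int (2*n) = int j" using G_idx by blast
  have "G (i+1) = c ! Suc j"
  proof (cases "Suc j < 2*n")
    case True
    have "nat (int j + 1) = Suc j" by arith
    then show ?thesis using G_succ[of i] j True by simp
  next
    case False then have "Suc j = 2*n" using j by simp
    then show ?thesis using G_succ[of i] j cN by simp
  qed
  then show ?thesis using pe[of j] j clen by simp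
qed


lemma G_shift: "i mod int (2*n) = int j \<Longrightarrow> G (i + int k) = c ! ((j + k) mod (2*n))"
proof -
  assume h: "i mod int (2*n) = int j"
  have "(i + int k) mod int (2*n) = (int j + int k) mod int (2*n)"
    using h by (metis mod_add_left_eq)
  also have "\<dots> = int ((j + k) mod (2*n))" by (simp add: zmod_int)
  finally show ?thesis unfolding Gf_def by simp
qed

lemma G_nb: "G i \<noteq> G (i+2)"
proof -
  obtain j where j: "j < 2*n" "G i = c ! j" "i mod int (2*n) = int j" using G_idx by blast
  have g2: "G (i+2) = c ! ((j + 2) mod (2*n))" using G_shift[OF j(3), of 2] by simp
  consider "j + 2 < 2*n" | "j + 2 = 2*n" | "j + 1 = 2*n" using j by linarith
  then show ?thesis
  proof cases
    case 1
    then show ?thesis using g2 j cnb[of j] clen by simp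
  next
    case 2
    then show ?thesis using g2 j cnb[of j] clen cN by simp
  next
    case 3
    then have "(j + 2) mod (2*n) = 1" proof -
      have "j + 2 = 1 + 2*n" using 3 by simp
      moreover have "(1 + 2*n) mod (2*n) = 1 mod (2*n)" by (rule mod_add_self2)
      moreover have "1 mod (2*n) = 1" using n2 by simp
      ultimately show ?thesis by simp
    qed
    moreover have "j = 2*n - 1" using 3 by simp
    ultimately show ?thesis using j wrap g2 by simp
  qed
qed

lemma G_seg:
  assumes d: "d = 1 \<or> d = -1" and m: "m \<ge> 1"
  shows "is_path (set c) (path_edges c) (map (\<lambda>k. G (a + d * int k)) [0..<m])"
proof (rule seg_path[OF m])
  fix k
  show "{G (a + d * int k), G (a + d * int (Suc k))} \<in> path_edges c"
    using d
  proof
    assume "d = 1"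
    then have e: "a + d * int (Suc k) = (a + d*int k) + 1" by simp
    show ?thesis using G_edge[of "a + d*int k"] by (simp only: e)
  next
    assume "d = -1"
    then have "{G (a + d * int k), G (a + d * int (Suc k))} = {G ((a - int k - 1)), G ((a - int k - 1) + 1)}"
      by (simp add: insert_commute algebra_simps)
    moreover have "{G ((a - int k - 1)), G ((a - int k - 1) + 1)} \<in> path_edges c" by (rule G_edge)
    ultimately show ?thesis by simp
  qed
next
  fix k show "G (a + d * int k) \<in> set c" by (rule G_set)
next
  fix k
  show "G (a + d * int k) \<noteq> G (a + d * int (k + 2))"
    using d
  proof
    assume "d = 1"
    then have e: "a + d * int (k + 2) = (a + d*int k) + 2" by simp
    show ?thesis unfolding e by (rule G_nb)
  next
    assume "d = -1"
    then show ?thesis using G_nb[of "a - int k - 2"] by (simp add: algebra_simps)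
  qed
qed

lemma G_in_E: "{G i, G (i+1)} \<in> E" using G_edge cE by blast

lemma G4: assumes "1 \<le> m" "m \<le> n" shows "G a \<noteq> G (a + int m)"
proof
  assume eq: "G a = G (a + int m)"
  consider "m = 1" | "m = 2" | "m \<ge> 3" using assms by linarith
  then show False
  proof cases
    case 1 then show ?thesis using eq edge_neq[OF gr G_in_E[of a]] by simp
  next
    case 2 then show ?thesis using eq G_nb[of a] by simp
  next
    case 3
    define p where "p = map (\<lambda>k. G ((a + 1) + 1 * int k)) [0..<m]"
    have hp: "is_path (set c) (path_edges c) p" unfolding p_def by (rule G_seg) (use 3 in auto)
    have "[G (a+1), G a] = p"
    proof (rule vp2[OF ng, of "m - 1"])
      show "1 \<le> m - 1" "m - 1 \<le> n - 1" using 3 assms by auto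
      show "s_path V E (m - 1) p" unfolding s_path_def using Hpath[OF hp] 3 by (simp add: p_def)
      show "straight opp p" using Hstraight[OF hp] .
      show "is_path V E [G (a + 1), G a]" unfolding is_path_def
        using G_set cV G_in_E[of a] by (auto simp: insert_commute less_Suc_eq)
      show "straight opp [G (a + 1), G a]" unfolding straight_def by simp
      show "length [G (a + 1), G a] \<le> m - 1 + 1" using 3 by simp
      show "hd [G (a + 1), G a] = hd p" using 3 by (simp add: p_def hd_map)
      have "last p = G (a + 1 + int (m - 1))" using 3 by (simp add: p_def last_map)
      also have "a + 1 + int (m - 1) = a + int m" using 3 by simp
      finally show "last [G (a + 1), G a] = last p" using eq by simp
    qed
    then have "length [G (a+1), G a] = length p" by simp
    then show False using 3 by (simp add: p_def)
  qed
qed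

lemma G5: assumes "G a = G b" shows "a mod int (2*n) = b mod int (2*n)"
proof (rule ccontr)
  assume ne: "a mod int (2*n) \<noteq> b mod int (2*n)"
  define r where "r = (b - a) mod int (2*n)"
  have pos: "int (2*n) > 0" using n2 by simp
  have r0: "0 \<le> r" "r < int (2*n)" using pos unfolding r_def by auto
  have "(a + r) mod int (2*n) = b mod int (2*n)" unfolding r_def
    by (metis add.commute diff_add_cancel mod_add_right_eq)
  then have gb: "G b = G (a + r)" using G_cong by metis
  have "r \<noteq> 0" using ne \<open>(a + r) mod int (2*n) = b mod int (2*n)\<close> by auto
  show False
  proof (cases "r \<le> int n")
    case True
    have "G a \<noteq> G (a + int (nat r))" by (rule G4) (use True r0 \<open>r \<noteq> 0\<close> in auto)
    then show False using r0 assms gb by simp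
  next
    case False
    have "G (a + r) \<noteq> G (a + r + int (nat (int (2*n) - r)))"
      by (rule G4) (use False r0 in auto)
    moreover have "a + r + int (nat (int (2*n) - r)) = a + int (2*n)" using r0 by simp
    moreover have "G (a + int (2*n)) = G a" by (rule G_cong) simp
    ultimately show False using assms gb by simp
  qed
qed

lemma pe_G: assumes "e \<in> path_edges c" shows "\<exists>i. e = {G i, G (i+1)}"
proof -
  obtain j where j: "e = {c ! j, c ! Suc j}" "Suc j < length c" using assms unfolding path_edges_def by blast
  have jl: "j < 2*n" using j clen by simp
  have "G (int j) = c ! j" by (rule G_nat[OF jl])
  moreover have "G (int j + 1) = c ! Suc j"
  proof (cases "Suc j < 2*n")
    case True then show ?thesis using G_nat[of "Suc j"] by (simp add: add.commute)
  next
    case False then have "Suc j = 2*n" using jl by simp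
    moreover have "G (int j + 1) = G 0"
    proof (rule G_cong)
      have "int j + 1 = int (2*n)" using \<open>Suc j = 2*n\<close> by linarith
      then show "(int j + 1) mod int (2 * n) = 0 mod int (2 * n)" by simp
    qed
    ultimately show ?thesis using cN G_nat[of 0] n2 by simp
  qed
  ultimately show ?thesis using j by metis
qed

lemma G_nbr: assumes "{G a, v} \<in> path_edges c" shows "v = G (a+1) \<or> v = G (a - 1)"
proof -
  obtain i where i: "{G a, v} = {G i, G (i+1)}" using pe_G[OF assms] by blast
  then consider "G a = G i" "v = G (i+1)" | "G a = G (i+1)" "v = G i" by (auto simp: doubleton_eq_iff)
  then show ?thesis
  proof cases
    case 1
    then have "a mod int (2*n) = i mod int (2*n)" using G5 by blast
    then have "G (i+1) = G (a+1)" by (intro G_cong) (metis mod_add_left_eq)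
    then show ?thesis using 1 by simp
  next
    case 2
    then have "a mod int (2*n) = (i+1) mod int (2*n)" using G5 by blast
    then have "G i = G (a - 1)" by (intro G_cong) (metis mod_diff_left_eq add_diff_cancel_right')
    then show ?thesis using 2 by simp
  qed
qed

lemma G_mem: assumes "u \<in> set c" shows "\<exists>i. u = G i"
proof -
  obtain j where j: "j < length c" "u = c ! j" using assms by (metis in_set_conv_nth)
  show ?thesis
  proof (cases "j < 2*n")
    case True then show ?thesis using G_nat j by metis
  next
    case False then have "j = 2*n" using j clen by simp
    have "G 0 = c ! 0" using G_nat[of 0] n2 by simp
    then show ?thesis using cN j \<open>j = 2*n\<close> by metis
  qed
qed

lemma locate:
  assumes hp: "is_path (set c) (path_edges c) P" and lp: "length P = n + 2"
  shows "\<exists>s d. (d = 1 \<or> d = -1) \<and> (\<forall>k \<le> n+1. P ! k = G (s + d * int k))"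
proof -
  have P0: "P ! 0 \<in> set c" using hp lp unfolding is_path_def by (metis nth_mem subsetD zero_less_Suc add_2_eq_Suc')
  obtain s where s: "P ! 0 = G s" using G_mem[OF P0] by blast
  have ed: "\<And>i. Suc i < length P \<Longrightarrow> {P ! i, P ! Suc i} \<in> path_edges c" using hp unfolding is_path_def by blast
  have nb: "\<And>i. i + 2 < length P \<Longrightarrow> P ! i \<noteq> P ! (i+2)" using hp unfolding is_path_def by blast
  have "P ! 1 = G (s+1) \<or> P ! 1 = G (s - 1)" using G_nbr ed[of 0] lp s by simp
  then obtain d where d: "d = 1 \<or> d = -1" "P ! 1 = G (s + d)" by (metis diff_conv_add_uminus)
  have main: "\<And>k. 1 \<le> k \<Longrightarrow> k \<le> n+1 \<Longrightarrow> P ! k = G (s + d * int k) \<and> P ! (k-1) = G (s + d * int (k-1))"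
  proof -
    fix k :: nat assume "1 \<le> k" "k \<le> n+1"
    then show "P ! k = G (s + d * int k) \<and> P ! (k-1) = G (s + d * int (k-1))"
    proof (induction k rule: dec_induct)
      case base then show ?case using d s by simp
    next
      case (step k)
      have IH: "P ! k = G (s + d * int k)" "P ! (k-1) = G (s + d * int (k-1))" using step by auto
      have "{G (s + d * int k), P ! Suc k} \<in> path_edges c" using ed[of k] IH lp step by simp
      then have or: "P ! Suc k = G (s + d * int k + 1) \<or> P ! Suc k = G (s + d * int k - 1)" by (rule G_nbr)
      have ne: "P ! Suc k \<noteq> P ! (k-1)" using nb[of "k-1"] lp step by (simp add: Suc_diff_le numeral_2_eq_2)
      have k1: "int (k - 1) = int k - 1" using step by simp
      from d(1) show ?case
      proof
        assume "d = 1" then show ?thesis using or ne IH k1 by (auto simp: algebra_simps)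
      next
        assume "d = -1" then show ?thesis using or ne IH k1 by (auto simp: algebra_simps)
      qed
    qed
  qed
  have "\<forall>k \<le> n+1. P ! k = G (s + d * int k)"
  proof (intro allI impI)
    fix k assume "k \<le> n+1"
    then show "P ! k = G (s + d * int k)" using main[of k] s by (cases "k = 0") auto
  qed
  then show ?thesis using d by blast
qed

lemma mainL:
  assumes hp: "is_path (set c) (path_edges c) P" and lp: "length P = n + 2"
  shows "\<exists>R. root n V E opp R \<and> hd R = hd P \<and> last R = P ! n \<and> R ! (n-1) = P ! (n+1)"
proof -
  obtain s d where d: "d = 1 \<or> d = -1" and P: "\<forall>k \<le> n+1. P ! k = G (s + d * int k)"
    using locate[OF hp lp] by blast
  define R where "R = map (\<lambda>k. G (s + (-d) * int k)) [0..<n+1]"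
  have hR: "is_path (set c) (path_edges c) R" unfolding R_def by (rule G_seg) (use d in auto)
  have cong: "G (s - d * int n) = G (s + d * int n)" "G (s - d * int (n-1)) = G (s + d * int (n+1))"
  proof -
    have e1: "s + d * int n = (s - d * int n) + d * int (2*n)" by (simp add: algebra_simps)
    have e2: "s + d * int (n+1) = (s - d * int (n-1)) + d * int (2*n)" using n2 by (simp add: algebra_simps)
    show "G (s - d * int n) = G (s + d * int n)" by (rule G_cong) (simp only: e1 mod_mult_self1)
    show "G (s - d * int (n-1)) = G (s + d * int (n+1))" by (rule G_cong) (simp only: e2 mod_mult_self1)
  qed
  have "root n V E opp R" unfolding root_def s_path_def
    using Hpath[OF hR] Hstraight[OF hR] by (simp add: R_def)
  moreover have "hd R = hd P"
  proof -
    have "hd R = R ! 0" unfolding R_def by (simp add: hd_conv_nth)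
    also have "\<dots> = G s" unfolding R_def by (simp del: upt_Suc add: nth_map)
    also have "\<dots> = P ! 0" using P by simp
    also have "\<dots> = hd P" using lp by (cases P) auto
    finally show ?thesis .
  qed
  moreover have "last R = P ! n" using P cong by (simp add: R_def last_map)
  moreover have "R ! (n-1) = P ! (n+1)"
  proof -
    have "R ! (n-1) = G (s + (-d) * int (n-1))" unfolding R_def
    proof -
      have u: "[0..<n+1] ! (n-1) = n-1" by (rule nth_upt[of 0, simplified]) simp
      show "map (\<lambda>k. G (s + - d * int k)) [0..<n + 1] ! (n - 1) = G (s + - d * int (n - 1))"
        apply (subst nth_map)
         apply (simp only: length_upt; simp)
        apply (simp only: u)
        done
    qed
    also have "\<dots> = G (s - d * int (n-1))" by simp
    also have "\<dots> = P ! (n+1)" using P cong(2) by simp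
    finally show ?thesis .
  qed
  ultimately show ?thesis by blast
qed

end


lemma extendL:
  assumes ng: "veldkamp_ngon n V E opp" and sp: "s_path V E (n+1) P" and st: "straight opp P"
  shows "\<exists>R. root n V E opp R \<and> hd R = hd P \<and> last R = P ! n \<and> R ! (n-1) = P ! (n+1)"
proof -
  obtain c where c: "closed_path V E (2 * n) c" "straight_circuit opp c" "is_path (set c) (path_edges c) P"
    using ng sp st unfolding veldkamp_ngon_def by blast
  show ?thesis using mainL[OF ng c(1) c(2) c(3)] sp unfolding s_path_def by simp
qed

lemma take_path: "is_path V E p \<Longrightarrow> 1 \<le> m \<Longrightarrow> m \<le> length p \<Longrightarrow> is_path V E (take m p)"
  unfolding is_path_def by (auto dest: in_set_takeD)

lemma take_straight: "straight opp p \<Longrightarrow> straight opp (take m p)"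
  unfolding straight_def by auto

lemma snoc_path:
  assumes "is_path V E p" "{last p, w} \<in> E" "w \<in> V" "length p \<ge> 2" "p ! (length p - 2) \<noteq> w"
  shows "is_path V E (p @ [w])"
proof -
  have ne: "p \<noteq> []" using assms by auto
  show ?thesis unfolding is_path_def
  proof (intro conjI allI impI)
    show "p @ [w] \<noteq> []" by simp
    show "set (p @ [w]) \<subseteq> V" using assms unfolding is_path_def by auto
  next
    fix i assume i: "Suc i < length (p @ [w])"
    show "{(p @ [w]) ! i, (p @ [w]) ! Suc i} \<in> E"
    proof (cases "Suc i < length p")
      case True then show ?thesis using assms(1) unfolding is_path_def by (simp add: nth_append)
    next
      case False then have "i = length p - 1" using i by simp
      then show ?thesis using assms(2) ne by (simp add: nth_append last_conv_nth)
    qed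
  next
    fix i assume i: "i + 2 < length (p @ [w])"
    show "(p @ [w]) ! i \<noteq> (p @ [w]) ! (i + 2)"
    proof (cases "i + 2 < length p")
      case True then show ?thesis using assms(1) unfolding is_path_def by (simp add: nth_append)
    next
      case False then have i2: "i + 2 = length p" using i by simp
      then have "(p @ [w]) ! (i+2) = w" by (simp add: nth_append)
      moreover have "(p @ [w]) ! i = p ! (length p - 2)" using i2 by (simp add: nth_append) (metis add_diff_cancel_right' add_2_eq_Suc')
      ultimately show ?thesis using assms(5) by simp
    qed
  qed
qed

lemma snoc_straight:
  assumes "straight opp p" "length p \<ge> 2" "opp (last p) (p ! (length p - 2)) w"
  shows "straight opp (p @ [w])"
  unfolding straight_def
proof (intro allI impI)
  fix i assume i: "i + 2 < length (p @ [w])"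
  show "opp ((p @ [w]) ! (i + 1)) ((p @ [w]) ! i) ((p @ [w]) ! (i + 2))"
  proof (cases "i + 2 < length p")
    case True then show ?thesis using assms(1) unfolding straight_def by (simp add: nth_append)
  next
    case False then have i2: "i + 2 = length p" using i by simp
    then have "(p @ [w]) ! (i+2) = w" by (simp add: nth_append)
    moreover have "(p @ [w]) ! i = p ! (length p - 2)" using i2 by (simp add: nth_append) (metis add_diff_cancel_right' add_2_eq_Suc')
    moreover have "(p @ [w]) ! (i+1) = last p" using i2 by (simp add: nth_append) (metis last_conv_nth list.size(3) nat.distinct(1) diff_Suc_1)
    ultimately show ?thesis using assms(3) by simp
  qed
qed

lemma extend_root:
  assumes ng: "veldkamp_ngon n V E opp" and r: "root n V E opp p" and y: "last p = y"
    and w: "w \<in> nbrs E y" and o: "opp y (p ! (n-1)) w"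
  shows "\<exists>R. root n V E opp R \<and> hd R = hd p \<and> last R = y \<and> R ! (n-1) = w"
proof -
  have n2: "n \<ge> 2" using ng unfolding veldkamp_ngon_def by simp
  have vg: "veldkamp_graph V E opp" using ng unfolding veldkamp_ngon_def by simp
  have gr: "graph V E" using vg unfolding veldkamp_graph_def by simp
  have lp: "length p = n + 1" and pp: "is_path V E p" and sp: "straight opp p"
    using r unfolding root_def s_path_def by auto
  have ne: "p \<noteq> []" using lp by auto
  have yV: "y \<in> V" using pp y ne unfolding is_path_def by auto
  have ly: "last p = p ! n" using lp ne by (simp add: last_conv_nth)
  have oprel: "opposition_rel (nbrs E y) (opp y)" using vg yV unfolding veldkamp_graph_def by simp
  have we: "{y, w} \<in> E" using w unfolding nbrs_def by simp
  have wV: "w \<in> V" using gr we unfolding graph_def by blast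
  have nw: "p ! (n-1) \<noteq> w" using oprel o unfolding opposition_rel_def by metis
  have P: "s_path V E (n+1) (p @ [w])" unfolding s_path_def
    using snoc_path[OF pp] we wV lp n2 nw y by simp
  have S: "straight opp (p @ [w])" using snoc_straight[OF sp] lp n2 o y by simp
  obtain R where R: "root n V E opp R" "hd R = hd (p @ [w])" "last R = (p @ [w]) ! n" "R ! (n-1) = (p @ [w]) ! (n+1)"
    using extendL[OF ng P S] by blast
  then show ?thesis using lp ly y ne by (auto simp: nth_append)
qed


theorem proposition2p10:
  fixes n :: nat and V :: "'a set" and E :: "'a set set" and opp :: "'a \<Rightarrow> 'a \<Rightarrow> 'a \<Rightarrow> bool"
  assumes "n \<ge> 2"
    and "veldkamp_ngon n V E opp"
    and "x \<in> V" and "y \<in> V"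
    and "opposite n V E opp x y"
    and "z \<in> nbrs E y"
  shows "\<exists>!p. root n V E opp p \<and> hd p = x \<and> last p = y \<and> p ! (n - 1) = z"
proof -
  note ng = assms(2)
  have vg: "veldkamp_graph V E opp" using ng unfolding veldkamp_ngon_def by simp
  obtain p where p: "root n V E opp p" "hd p = x" "last p = y"
    using assms(5) unfolding opposite_def by blast
  have lp: "length p = n + 1" and pp: "is_path V E p" and sp: "straight opp p"
    using p(1) unfolding root_def s_path_def by auto
  have ne: "p \<noteq> []" using lp by auto
  have ly: "p ! n = y" using p(3) lp ne by (simp add: last_conv_nth)
  have oprel: "opposition_rel (nbrs E y) (opp y)" and pl: "plump 2 (nbrs E y) (opp y)"
    using vg assms(4) unfolding veldkamp_graph_def by auto
  have "{p ! (n-1), p ! Suc (n-1)} \<in> E"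
  proof -
    have "Suc (n-1) < length p" using lp assms(1) by simp
    then show ?thesis using pp unfolding is_path_def by blast
  qed
  moreover have "Suc (n-1) = n" using assms(1) by simp
  ultimately have "{y, p ! (n-1)} \<in> E" using ly assms(1) by (simp add: insert_commute)
  then have pn: "p ! (n-1) \<in> nbrs E y" unfolding nbrs_def by simp
  have ex: "\<exists>q. root n V E opp q \<and> hd q = x \<and> last q = y \<and> q ! (n - 1) = z"
  proof (cases "p ! (n-1) = z")
    case True then show ?thesis using p by blast
  next
    case False
    have "{p ! (n-1), z} \<subseteq> nbrs E y" "finite {p ! (n-1), z}" "card {p ! (n-1), z} \<le> 2"
      using pn assms(6) by (auto simp: card_insert_if)
    then have "\<exists>w\<in>nbrs E y. \<forall>s\<in>{p ! (n-1), z}. opp y w s"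
      using pl unfolding plump_def by (meson)
    then obtain w where w: "w \<in> nbrs E y" "opp y w (p ! (n-1))" "opp y w z" by auto
    have o1: "opp y (p ! (n-1)) w" using oprel w(2) unfolding opposition_rel_def by blast
    obtain R1 where R1: "root n V E opp R1" "hd R1 = x" "last R1 = y" "R1 ! (n-1) = w"
      using extend_root[OF ng p(1) p(3) w(1) o1] p(2) by blast
    obtain R2 where R2: "root n V E opp R2" "hd R2 = x" "last R2 = y" "R2 ! (n-1) = z"
      using extend_root[OF ng R1(1) R1(3) assms(6)] w(3) R1(2,4) by blast
    then show ?thesis by blast
  qed
  have uniq: "q1 = q2" if q1: "root n V E opp q1 \<and> hd q1 = x \<and> last q1 = y \<and> q1 ! (n - 1) = z"
    and q2: "root n V E opp q2 \<and> hd q2 = x \<and> last q2 = y \<and> q2 ! (n - 1) = z" for q1 q2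
  proof -
    have l1: "length q1 = n+1" and pp1: "is_path V E q1" and s1: "straight opp q1"
      using q1 unfolding root_def s_path_def by auto
    have l2: "length q2 = n+1" and pp2: "is_path V E q2" and s2: "straight opp q2"
      using q2 unfolding root_def s_path_def by auto
    have "take n q2 = take n q1"
    proof (rule vp2[OF ng, of "n-1"])
      show "1 \<le> n - 1" "n - 1 \<le> n - 1" using assms(1) by auto
      show "s_path V E (n - 1) (take n q1)" unfolding s_path_def
        using take_path[OF pp1, of n] l1 assms(1) by simp
      show "straight opp (take n q1)" by (rule take_straight[OF s1])
      show "is_path V E (take n q2)" using take_path[OF pp2, of n] l2 assms(1) by simp
      show "straight opp (take n q2)" by (rule take_straight[OF s2])
      show "length (take n q2) \<le> n - 1 + 1" using l2 by simp
      show "hd (take n q2) = hd (take n q1)" using q1 q2 assms(1) by simp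
      have "last (take n q1) = q1 ! (n-1)" using l1 assms(1)
        by (subst last_conv_nth) (auto simp: min_def)
      moreover have "last (take n q2) = q2 ! (n-1)" using l2 assms(1)
        by (subst last_conv_nth) (auto simp: min_def)
      ultimately show "last (take n q2) = last (take n q1)" using q1 q2 by simp
    qed
    moreover have "q1 = take n q1 @ [last q1]"
    proof -
      have "take (Suc n) q1 = take n q1 @ [q1 ! n]" using take_Suc_conv_app_nth[of n q1] l1 by simp
      moreover have "take (Suc n) q1 = q1" using l1 by simp
      moreover have "last q1 = q1 ! n" using l1 by (cases "q1 = []") (auto simp: last_conv_nth)
      ultimately show ?thesis by simp
    qed
    moreover have "q2 = take n q2 @ [last q2]"
    proof -
      have "take (Suc n) q2 = take n q2 @ [q2 ! n]" using take_Suc_conv_app_nth[of n q2] l2 by simp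
      moreover have "take (Suc n) q2 = q2" using l2 by simp
      moreover have "last q2 = q2 ! n" using l2 by (cases "q2 = []") (auto simp: last_conv_nth)
      ultimately show ?thesis by simp
    qed
    ultimately show ?thesis using q1 q2 by metis
  qed
  show ?thesis using ex uniq by blast
qed

end
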